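(* Let $\mathcal M=(W,W_\bot,\preccurlyeq,\sqsubseteq,V)$ be a bi-intuitionistic model, $\Sigma$ a finite set of formulas closed under subformulas, and $\approx$ a strong $\Sigma$-bisimulation on $\mathcal M$ which is also an equivalence relation. If $\sqsubseteq$ is downward confluent in $\mathcal M$, then $\sqsubseteq/{\approx}$ is downward confluent in $\mathcal M/{\approx}$.
   Context: Formulas: $p\mid\bot\mid\varphi\wedge\psi\mid\varphi\vee\psi\mid\varphi\to\psi\mid\Diamond\varphi\mid\Box\varphi$ over a countably infinite set $\mathbb P$. A bi-intuitionistic model $(W,W_\bot,\preccurlyeq,\sqsubseteq,V)$: $\preccurlyeq,\sqsubseteq$ preorders on $W$, $W_\bot$ upward closed under both, $V:\mathbb P\to2^W$ with $V(p)$ $\preccurlyeq$-upward closed and $\supseteq W_\bot$. Satisfaction: $p$ iff $w\in V(p)$; $\bot$ iff $w\in W_\bot$; $\wedge,\vee$ pointwise; $w\models\varphi\to\psi$ iff for all $v\succcurlyeq w$, $v\models\varphi$ implies $v\models\psi$; $w\models\Diamond\varphi$ iff for all $u\succcurlyeq w$ there is $v\sqsupseteq u$ with $v\models\varphi$; $w\models\Box\varphi$ iff $v\models\varphi$ whenever $w\preccurlyeq u\sqsubseteq v$. For $R\subseteq W\times W$ (relative to $\preccurlyeq$): forward confluent if $w\preccurlyeq w'$, $wRv$ imply some $v'$ with $v\preccurlyeq v'$, $w'Rv'$; backward confluent if $wRv\preccurlyeq v'$ implies some $w'$ with $w\preccurlyeq w'Rv'$; downward confluent if $w\preccurlyeq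 vRv'$ implies some $w'$ with $wRw'\preccurlyeq v'$. The $\Sigma$-label of $w$ is $\ell(w)=(\ell^+(w);\ell^\Diamond(w))$ with $\ell^+(w)=\{\varphi\in\Sigma:(\mathcal M,w)\models\varphi\}$, $\ell^\Diamond(w)=\{\varphi\in\Sigma:\forall v\sqsupseteq w,\ (\mathcal M,v)\not\models\varphi\}$. A $\Sigma$-bisimulation is a forward and backward confluent $Z$ with $wZv\Rightarrow\ell(w)=\ell(v)$; a strong $\Sigma$-bisimulation is a $\Sigma$-bisimulation $Z$ such that $Z$ and $Z^{-1}$ are downward confluent. For an equivalence relation $\approx$ on $W$ with classes $[w]$, the quotient $\mathcal M/{\approx}$ has worlds $\{[w]\}$, fallible worlds $\{[w]:w\in W_\bot\}$, $[w]\,(\preccurlyeq/{\approx})\,[v]$ iff there are $w'\approx w$, $v'\approx v$ with $w'\preccurlyeq v'$; $\sqsubseteq/{\approx}$ is the transitive closure of the relation given by $[w]\,R\,[v]$ iff there are $w',v'$ with $w\approx w'\sqsubseteq v'\approx v$; and $[w]\in (V/{\approx})(p)$ iff some $w'\approx w$ lies in $V(p)$. *)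

theory Defs
  imports Main
begin

datatype fm = Atom nat | Bot | And fm fm | Or fm fm | Imp fm fm | Dia fm | Box fm

primrec subfms :: "fm \<Rightarrow> fm set" where
  "subfms (Atom p) = {Atom p}"
| "subfms Bot = {Bot}"
| "subfms (And a b) = insert (And a b) (subfms a \<union> subfms b)"
| "subfms (Or a b) = insert (Or a b) (subfms a \<union> subfms b)"
| "subfms (Imp a b) = insert (Imp a b) (subfms a \<union> subfms b)"
| "subfms (Dia a) = insert (Dia a) (subfms a)"
| "subfms (Box a) = insert (Box a) (subfms a)"

definition sub_closed :: "fm set \<Rightarrow> bool" where
  "sub_closed S \<longleftrightarrow> (\<forall>\<phi>\<in>S. subfms \<phi> \<subseteq> S)"

record 'w model =
  W :: "'w set"
  Wb :: "'w set"
  le :: "'w rel"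
  sq :: "'w rel"
  V :: "nat \<Rightarrow> 'w set"

definition preorder_on :: "'w set \<Rightarrow> 'w rel \<Rightarrow> bool" where
  "preorder_on A R \<longleftrightarrow> R \<subseteq> A \<times> A \<and> refl_on A R \<and> trans R"

definition up_closed :: "'w rel \<Rightarrow> 'w set \<Rightarrow> bool" where
  "up_closed R X \<longleftrightarrow> (\<forall>w v. w \<in> X \<and> (w, v) \<in> R \<longrightarrow> v \<in> X)"

definition bi_model :: "'w model \<Rightarrow> bool" where
  "bi_model M \<longleftrightarrow> preorder_on (W M) (le M) \<and> preorder_on (W M) (sq M)
     \<and> Wb M \<subseteq> W M \<and> up_closed (le M) (Wb M) \<and> up_closed (sq M) (Wb M)
     \<and> (\<forall>p. V M p \<subseteq> W M \<and> up_closed (le M) (V M p) \<and> Wb M \<subseteq> V M p)"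

primrec sat :: "'w model \<Rightarrow> 'w \<Rightarrow> fm \<Rightarrow> bool" where
  "sat M w (Atom p) \<longleftrightarrow> w \<in> V M p"
| "sat M w Bot \<longleftrightarrow> w \<in> Wb M"
| "sat M w (And a b) \<longleftrightarrow> sat M w a \<and> sat M w b"
| "sat M w (Or a b) \<longleftrightarrow> sat M w a \<or> sat M w b"
| "sat M w (Imp a b) \<longleftrightarrow> (\<forall>v. (w, v) \<in> le M \<longrightarrow> sat M v a \<longrightarrow> sat M v b)"
| "sat M w (Dia a) \<longleftrightarrow> (\<forall>u. (w, u) \<in> le M \<longrightarrow> (\<exists>v. (u, v) \<in> sq M \<and> sat M v a))"
| "sat M w (Box a) \<longleftrightarrow> (\<forall>u v. (w, u) \<in> le M \<longrightarrow> (u, v) \<in> sq M \<longrightarrow> sat M v a)"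

definition label_plus :: "'w model \<Rightarrow> fm set \<Rightarrow> 'w \<Rightarrow> fm set" where
  "label_plus M S w = {\<phi> \<in> S. sat M w \<phi>}"

definition label_dia :: "'w model \<Rightarrow> fm set \<Rightarrow> 'w \<Rightarrow> fm set" where
  "label_dia M S w = {\<phi> \<in> S. \<forall>v. (w, v) \<in> sq M \<longrightarrow> \<not> sat M v \<phi>}"

definition label :: "'w model \<Rightarrow> fm set \<Rightarrow> 'w \<Rightarrow> fm set \<times> fm set" where
  "label M S w = (label_plus M S w, label_dia M S w)"

definition forward_confluent :: "'w rel \<Rightarrow> 'w rel \<Rightarrow> bool" where
  "forward_confluent P R \<longleftrightarrow>
     (\<forall>w w' v. (w, w') \<in> P \<and> (w, v) \<in> R \<longrightarrow> (\<exists>v'. (v, v') \<in> P \<and> (w', v') \<in> R))"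

definition backward_confluent :: "'w rel \<Rightarrow> 'w rel \<Rightarrow> bool" where
  "backward_confluent P R \<longleftrightarrow>
     (\<forall>w v v'. (w, v) \<in> R \<and> (v, v') \<in> P \<longrightarrow> (\<exists>w'. (w, w') \<in> P \<and> (w', v') \<in> R))"

definition downward_confluent :: "'w rel \<Rightarrow> 'w rel \<Rightarrow> bool" where
  "downward_confluent P R \<longleftrightarrow>
     (\<forall>w v v'. (w, v) \<in> P \<and> (v, v') \<in> R \<longrightarrow> (\<exists>w'. (w, w') \<in> R \<and> (w', v') \<in> P))"

definition sigma_bisim :: "'w model \<Rightarrow> fm set \<Rightarrow> 'w rel \<Rightarrow> bool" where
  "sigma_bisim M S Z \<longleftrightarrow> Z \<subseteq> W M \<times> W M
     \<and> forward_confluent (le M) Z \<and> backward_confluent (le M) Z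
     \<and> (\<forall>w v. (w, v) \<in> Z \<longrightarrow> label M S w = label M S v)"

definition strong_sigma_bisim :: "'w model \<Rightarrow> fm set \<Rightarrow> 'w rel \<Rightarrow> bool" where
  "strong_sigma_bisim M S Z \<longleftrightarrow> sigma_bisim M S Z
     \<and> downward_confluent (le M) Z \<and> downward_confluent (le M) (Z\<inverse>)"

definition quot :: "'w model \<Rightarrow> 'w rel \<Rightarrow> 'w set model" where
  "quot M E = \<lparr> W = W M // E,
     Wb = {E `` {w} | w. w \<in> Wb M},
     le = {(E `` {w}, E `` {v}) | w v. \<exists>w' v'. (w, w') \<in> E \<and> (v, v') \<in> E \<and> (w', v') \<in> le M \<and> w \<in> W M \<and> v \<in> W M},
     sq = ({(E `` {w}, E `` {v}) | w v. \<exists>w' v'. (w, w') \<in> E \<and> (v', v) \<in> E \<and> (w', v') \<in> sq M \<and> w \<in> W M \<and> v \<in> W M})\<^sup>+,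
     V = (\<lambda>p. {E `` {w} | w. w \<in> W M \<and> (\<exists>w'. (w, w') \<in> E \<and> w' \<in> V M p)}) \<rparr>"

end

theory Submission
  imports Defs
begin

lemma key:
  assumes bm: "bi_model M" and sb: "strong_sigma_bisim M S E" and eq: "equiv (W M) E"
    and dc: "downward_confluent (le M) (sq M)"
    and q: "(X, Y) \<in> le (quot M E)"
    and r: "(Y, Z) \<in> {(E `` {w}, E `` {v}) | w v. \<exists>w' v'. (w, w') \<in> E \<and> (v', v) \<in> E \<and> (w', v') \<in> sq M \<and> w \<in> W M \<and> v \<in> W M}"
  shows "\<exists>X'. (X, X') \<in> {(E `` {w}, E `` {v}) | w v. \<exists>w' v'. (w, w') \<in> E \<and> (v', v) \<in> E \<and> (w', v') \<in> sq M \<and> w \<in> W M \<and> v \<in> W M} \<and> (X', Z) \<in> le (quot M E)"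
proof -
  have Esub: "E \<subseteq> W M \<times> W M" using eq by (simp add: equiv_def refl_on_def)
  have sym: "sym E" and tr: "trans E" using eq by (auto simp: equiv_def)
  have lesub: "le M \<subseteq> W M \<times> W M" and sqsub: "sq M \<subseteq> W M \<times> W M"
    using bm by (auto simp: bi_model_def preorder_on_def)
  have dE: "downward_confluent (le M) E" using sb by (simp add: strong_sigma_bisim_def)
  from q obtain w v w1 v1 where X: "X = E``{w}" and Y: "Y = E``{v}" and
    "(w,w1)\<in>E" "(v,v1)\<in>E" "(w1,v1)\<in>le M" "w\<in>W M" "v\<in>W M"
    by (auto simp: quot_def)
  from r obtain a b a1 b1 where Y2: "Y = E``{a}" and Z: "Z = E``{b}" and
    "(a,a1)\<in>E" "(b1,b)\<in>E" "(a1,b1)\<in>sq M" "a\<in>W M" "b\<in>W M" by blast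
  have "(v,a)\<in>E" using Y Y2 \<open>v\<in>W M\<close> \<open>a\<in>W M\<close> eq eq_equiv_class_iff by fastforce
  hence "(v1,a1)\<in>E" using \<open>(v,v1)\<in>E\<close> \<open>(a,a1)\<in>E\<close> sym tr by (meson symD transD)
  then obtain w2 where "(w1,w2)\<in>E" "(w2,a1)\<in>le M"
    using dE \<open>(w1,v1)\<in>le M\<close> unfolding downward_confluent_def by blast
  then obtain w3 where "(w2,w3)\<in>sq M" "(w3,b1)\<in>le M"
    using dc \<open>(a1,b1)\<in>sq M\<close> unfolding downward_confluent_def by blast
  have "(w,w2)\<in>E" using \<open>(w,w1)\<in>E\<close> \<open>(w1,w2)\<in>E\<close> tr by (meson transD)
  have w3W: "w3 \<in> W M" using \<open>(w2,w3)\<in>sq M\<close> sqsub by blast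
  have "(w3,w3)\<in>E" using eq w3W by (simp add: equiv_def refl_on_def)
  have "(b,b1)\<in>E" using \<open>(b1,b)\<in>E\<close> sym by (meson symD)
  have 1: "(X, E``{w3}) \<in> {(E `` {w}, E `` {v}) | w v. \<exists>w' v'. (w, w') \<in> E \<and> (v', v) \<in> E \<and> (w', v') \<in> sq M \<and> w \<in> W M \<and> v \<in> W M}"
    using X \<open>(w,w2)\<in>E\<close> \<open>(w3,w3)\<in>E\<close> \<open>(w2,w3)\<in>sq M\<close> \<open>w\<in>W M\<close> w3W by blast
  have 2: "(E``{w3}, Z) \<in> le (quot M E)"
    unfolding quot_def using Z \<open>(w3,w3)\<in>E\<close> \<open>(b,b1)\<in>E\<close> \<open>(w3,b1)\<in>le M\<close> w3W \<open>b\<in>W M\<close>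
    by auto
  show ?thesis using 1 2 by blast
qed

theorem mainTheorem14:
  fixes M :: "'w model" and S :: "fm set" and E :: "'w rel"
  assumes "bi_model M"
    and "finite S" and "sub_closed S"
    and "strong_sigma_bisim M S E" and "equiv (W M) E"
    and "downward_confluent (le M) (sq M)"
  shows "downward_confluent (le (quot M E)) (sq (quot M E))"
proof -
  let ?R = "{(E `` {w}, E `` {v}) | w v. \<exists>w' v'. (w, w') \<in> E \<and> (v', v) \<in> E \<and> (w', v') \<in> sq M \<and> w \<in> W M \<and> v \<in> W M}"
  have sq: "sq (quot M E) = ?R\<^sup>+" by (simp add: quot_def)
  have "\<exists>X'. (X, X') \<in> ?R\<^sup>+ \<and> (X', Z) \<in> le (quot M E)"
    if "(Y, Z) \<in> ?R\<^sup>+" "(X, Y) \<in> le (quot M E)" for X Y Z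
    using that(1)
  proof (induction rule: trancl_induct)
    case (base Z)
    then show ?case using key[OF assms(1,4,5,6) that(2)] by blast
  next
    case (step Z' Z)
    then obtain X' where "(X, X') \<in> ?R\<^sup>+" "(X', Z') \<in> le (quot M E)" by blast
    with key[OF assms(1,4,5,6) this(2) step(2)] show ?case by (meson trancl.trancl_into_trancl)
  qed
  then show ?thesis unfolding downward_confluent_def sq by blast
qed

end
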